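(* Let $k$ be a field of characteristic $p > 0$, let $n \geq 3$, let $d_1 \ge d_2 \ge \dots \ge d_n \ge 2$ be integers, and let $A = k[x_1,\ldots,x_n]/(x_1^{d_1}, \ldots, x_n^{d_n})$. Write $d_i = N_i p + r_i$ with $N_i$ integers and $0<r_i\le p$. If one of the conditions below holds, then $A$ fails to have the strong Lefschetz property: (1) $p = 2$; (2) $p \geq 3$, $d_1 > p$, $d_2 \leq p$ and $\sum_{i=2}^n (d_i - 1) > r_1$; (3) $p \geq 3$, $d_1 > p$, $d_2 \leq p$ and $r_1 + \sum_{i=2}^n(d_i-1) > p$; (4) $p \geq 3$, $d_1 \leq p$ and $\sum_{i=1}^n(d_i-1) \geq p$; (5) $p \geq 3$ and $d_2 > p$.
   Context: $A$ is graded by degree, $A=\bigoplus_{i\ge0} A_i$. A linear map has maximal rank if it is injective or surjective. A graded artinian algebra $A$ has the strong Lefschetz property if there is a linear form $\ell\in A_1$ such that for all $i\ge 0$ and all $m\ge 1$ the map $A_i\to A_{i+m}$, $a\mapsto \ell^m a$, has maximal rank. *)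

theory Defs
  imports Main "HOL-Library.Poly_Mapping"
begin

text \<open>Polynomials in the variables x_1, x_2, ... over a field: monomials are
  exponent vectors (nat \<Rightarrow>0 nat), polynomials are finitely supported
  coefficient functions on monomials, with the convolution product.\<close>

type_synonym 'k mpoly = "(nat \<Rightarrow>\<^sub>0 nat) \<Rightarrow>\<^sub>0 'k"

text \<open>Standard monomials of A = k[x_1..x_n]/(x_1^d_1,...,x_n^d_n):
  only variables x_1..x_n occur, and the exponent of x_i is < d_i.
  They form a k-basis of A.\<close>
definition std_mon :: "nat \<Rightarrow> (nat \<Rightarrow> nat) \<Rightarrow> (nat \<Rightarrow>\<^sub>0 nat) \<Rightarrow> bool" where
  "std_mon n d a \<longleftrightarrow> Poly_Mapping.keys a \<subseteq> {1..n} \<and> (\<forall>i\<in>{1..n}. Poly_Mapping.lookup a i < d i)"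

definition mon_deg :: "nat \<Rightarrow> (nat \<Rightarrow>\<^sub>0 nat) \<Rightarrow> nat" where
  "mon_deg n a = (\<Sum>i\<in>{1..n}. Poly_Mapping.lookup a i)"

text \<open>Normal form modulo the monomial ideal (x_1^d_1,...,x_n^d_n):
  discard all non-standard monomials.\<close>
definition trunc :: "nat \<Rightarrow> (nat \<Rightarrow> nat) \<Rightarrow> 'k::comm_monoid_add mpoly \<Rightarrow> 'k mpoly" where
  "trunc n d f = (\<Sum>a\<in>{a\<in>Poly_Mapping.keys f. std_mon n d a}. Poly_Mapping.single a (Poly_Mapping.lookup f a))"

text \<open>The graded piece A_i, realised as the k-span of standard monomials of degree i.\<close>
definition A_deg :: "nat \<Rightarrow> (nat \<Rightarrow> nat) \<Rightarrow> nat \<Rightarrow> 'k::zero mpoly set" where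
  "A_deg n d i = {f. \<forall>a\<in>Poly_Mapping.keys f. std_mon n d a \<and> mon_deg n a = i}"

definition mult_map :: "nat \<Rightarrow> (nat \<Rightarrow> nat) \<Rightarrow> 'k::comm_ring_1 mpoly \<Rightarrow> nat \<Rightarrow> 'k mpoly \<Rightarrow> 'k mpoly" where
  "mult_map n d l m f = trunc n d (l ^ m * f)"

definition max_rank :: "nat \<Rightarrow> (nat \<Rightarrow> nat) \<Rightarrow> 'k::comm_ring_1 mpoly \<Rightarrow> nat \<Rightarrow> nat \<Rightarrow> bool" where
  "max_rank n d l i m \<longleftrightarrow>
     inj_on (mult_map n d l m) (A_deg n d i) \<or>
     mult_map n d l m ` A_deg n d i = A_deg n d (i + m)"

definition has_SLP :: "'k::field itself \<Rightarrow> nat \<Rightarrow> (nat \<Rightarrow> nat) \<Rightarrow> bool" where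
  "has_SLP TYPE('k) n d \<longleftrightarrow>
     (\<exists>l::'k mpoly. l \<in> A_deg n d 1 \<and> (\<forall>i m. m \<ge> 1 \<longrightarrow> max_rank n d l i m))"

end

theory Submission
  imports Defs "HOL-Computational_Algebra.Primes" "HOL-Computational_Algebra.Euclidean_Algorithm"
begin


lemma frob2:
  fixes x y :: "'a::comm_ring_1"
  assumes pr: "prime p" and z: "of_nat p = (0::'a)"
  shows "(x + y) ^ p = x ^ p + y ^ p"
proof -
  have p0: "p > 0" using pr prime_gt_0_nat by blast
  have mid: "of_nat (p choose k) = (0::'a)" if "0 < k" "k < p" for k
  proof -
    have "p dvd (p choose k)" by (rule dvd_choose_prime) (use that pr in auto)
    then obtain m where "p choose k = p * m" by (rule dvdE)
    then show ?thesis using z by simp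
  qed
  have p2: "p \<ge> 2" using pr prime_ge_2_nat by blast
  define m where "m = p - 2"
  have m: "p = Suc (Suc m)" using p2 unfolding m_def by simp
  define t where "t k = of_nat (p choose k) * x ^ k * y ^ (p - k)" for k
  have "(x + y) ^ p = (\<Sum>k\<le>p. t k)"
    unfolding t_def by (rule binomial_ring)
  also have "\<dots> = (\<Sum>k\<le>Suc m. t k) + t p" using m by (simp only: sum.atMost_Suc)
  also have "(\<Sum>k\<le>Suc m. t k) = t 0 + (\<Sum>i\<le>m. t (Suc i))" by (rule sum.atMost_Suc_shift)
  also have "(\<Sum>i\<le>m. t (Suc i)) = 0"
  proof (rule sum.neutral, rule ballI)
    fix i assume "i \<in> {..m}"
    then have "0 < Suc i" "Suc i < p" using m by auto
    then show "t (Suc i) = 0" unfolding t_def using mid by simp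
  qed
  also have "t 0 = y ^ p" unfolding t_def by simp
  also have "t p = x ^ p" unfolding t_def by simp
  finally show ?thesis by (simp add: add.commute)
qed

lemma frob_sum:
  fixes f :: "'b \<Rightarrow> 'a::comm_ring_1"
  assumes pr: "prime p" and z: "of_nat p = (0::'a)"
  shows "(sum f S) ^ (p ^ k) = sum (\<lambda>j. f j ^ (p ^ k)) S"
proof -
  have p0: "p > 0" using pr prime_gt_0_nat by blast
  have gen: "(sum g T) ^ p = sum (\<lambda>j. g j ^ p) T" for g :: "'b \<Rightarrow> 'a" and T
  proof (induction T rule: infinite_finite_induct)
    case (infinite A) then show ?case using p0 by (simp add: zero_power)
  next
    case empty then show ?case using p0 by (simp add: zero_power)
  next
    case (insert a A)
    have "(sum g (insert a A)) ^ p = (g a + sum g A) ^ p" by (simp only: sum.insert[OF insert(1,2)])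
    also have "\<dots> = g a ^ p + (sum g A) ^ p" by (rule frob2[OF pr z])
    also have "\<dots> = g a ^ p + sum (\<lambda>j. g j ^ p) A" by (simp only: insert(3))
    also have "\<dots> = sum (\<lambda>j. g j ^ p) (insert a A)" by (simp only: sum.insert[OF insert(1,2)])
    finally show ?case .
  qed
  show ?thesis
  proof (induction k)
    case 0 then show ?case by simp
  next
    case (Suc k)
    have "(sum f S) ^ (p ^ Suc k) = ((sum f S) ^ (p ^ k)) ^ p"
      by (simp only: power_Suc2 power_mult)
    also have "\<dots> = (sum (\<lambda>j. f j ^ (p ^ k)) S) ^ p" by (simp only: Suc.IH)
    also have "\<dots> = sum (\<lambda>j. (f j ^ (p ^ k)) ^ p) S" by (rule gen)
    also have "\<dots> = sum (\<lambda>j. f j ^ (p ^ Suc k)) S"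
      by (simp only: power_Suc2 power_mult)
    finally show ?case .
  qed
qed

lemma lookup_trunc: "Poly_Mapping.lookup (trunc n d f) b = (if std_mon n d b then Poly_Mapping.lookup f b else 0)"
proof -
  let ?S = "{a\<in>Poly_Mapping.keys f. std_mon n d a}"
  have fin: "finite ?S" by simp
  have "Poly_Mapping.lookup (trunc n d f) b = (\<Sum>a\<in>?S. if b = a then Poly_Mapping.lookup f a else 0)"
    unfolding trunc_def lookup_sum by (intro sum.cong) (auto simp: lookup_single when_def)
  also have "\<dots> = (if b \<in> ?S then Poly_Mapping.lookup f b else 0)" using fin by simp
  also have "\<dots> = (if std_mon n d b then Poly_Mapping.lookup f b else 0)" by (auto simp: in_keys_iff)
  finally show ?thesis .
qed

lemma poly_expand: "f = (\<Sum>a\<in>Poly_Mapping.keys f. Poly_Mapping.single a (Poly_Mapping.lookup f a))"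
proof (rule poly_mapping_eqI)
  fix k
  have "Poly_Mapping.lookup (\<Sum>a\<in>Poly_Mapping.keys f. Poly_Mapping.single a (Poly_Mapping.lookup f a)) k
      = (\<Sum>a\<in>Poly_Mapping.keys f. if k = a then Poly_Mapping.lookup f a else 0)"
    unfolding lookup_sum by (intro sum.cong) (auto simp: lookup_single when_def)
  also have "\<dots> = (if k \<in> Poly_Mapping.keys f then Poly_Mapping.lookup f k else 0)"
    by simp
  also have "\<dots> = Poly_Mapping.lookup f k" by (simp add: in_keys_iff)
  finally show "Poly_Mapping.lookup f k = Poly_Mapping.lookup (\<Sum>a\<in>Poly_Mapping.keys f. Poly_Mapping.single a (Poly_Mapping.lookup f a)) k" by (rule sym)
qed

lemma keys_sum_sub: "Poly_Mapping.keys (sum g S) \<subseteq> (\<Union>x\<in>S. Poly_Mapping.keys (g x))"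
proof
  fix x assume "x \<in> Poly_Mapping.keys (sum g S)"
  then have "(\<Sum>a\<in>S. Poly_Mapping.lookup (g a) x) \<noteq> 0" by (simp add: in_keys_iff lookup_sum)
  then obtain a where "a \<in> S" "Poly_Mapping.lookup (g a) x \<noteq> 0" by (meson sum.not_neutral_contains_not_neutral)
  then show "x \<in> (\<Union>x\<in>S. Poly_Mapping.keys (g x))" by (auto simp: in_keys_iff)
qed

lemma keys_single_pow:
  "Poly_Mapping.keys ((Poly_Mapping.single (a::nat\<Rightarrow>\<^sub>0nat) (c::'k::comm_semiring_1)) ^ m)
     \<subseteq> {b. \<forall>j. Poly_Mapping.lookup b j = m * Poly_Mapping.lookup a j}"
proof (induction m)
  case 0 then show ?case by simp
next
  case (Suc m)
  have kk: "Poly_Mapping.keys (Poly_Mapping.single a c ^ Suc m) \<subseteq> {u+v | u v. u \<in> Poly_Mapping.keys (Poly_Mapping.single a c) \<and> v \<in> Poly_Mapping.keys (Poly_Mapping.single a c ^ m)}"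
    using keys_mult[of "Poly_Mapping.single a c" "Poly_Mapping.single a c ^ m"] by (simp only: power_Suc)
  show ?case
  proof
    fix x assume "x \<in> Poly_Mapping.keys (Poly_Mapping.single a c ^ Suc m)"
    then obtain u v where uv: "u \<in> Poly_Mapping.keys (Poly_Mapping.single a c)" "v \<in> Poly_Mapping.keys (Poly_Mapping.single a c ^ m)" "x = u + v"
      using kk by blast
    have "u = a" using uv(1) by (simp split: if_splits)
    moreover have "\<forall>j. Poly_Mapping.lookup v j = m * Poly_Mapping.lookup a j" using uv(2) Suc by blast
    ultimately show "x \<in> {b. \<forall>j. Poly_Mapping.lookup b j = Suc m * Poly_Mapping.lookup a j}"
      using uv(3) by (simp add: lookup_add)
  qed
qed



definition divmon :: "nat \<Rightarrow> nat \<Rightarrow> nat \<Rightarrow> (nat \<Rightarrow>\<^sub>0 nat) \<Rightarrow> bool" where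
  "divmon n P t b \<longleftrightarrow> (\<forall>j. P dvd Poly_Mapping.lookup b j) \<and> Poly_Mapping.keys b \<subseteq> {1..n} \<and> mon_deg n b = P * t"

lemma divmon_add: "divmon n P s u \<Longrightarrow> divmon n P t v \<Longrightarrow> divmon n P (s + t) (u + v)"
  unfolding divmon_def mon_deg_def
  using keys_add[of u v] by (auto simp: lookup_add sum.distrib algebra_simps)

lemma keys_pow_divmon:
  assumes "\<forall>b\<in>Poly_Mapping.keys (x::'k::comm_semiring_1 mpoly). divmon n P 1 b"
  shows "\<forall>b\<in>Poly_Mapping.keys (x ^ q). divmon n P q b"
proof (induction q)
  case 0 then show ?case by (simp add: divmon_def mon_deg_def)
next
  case (Suc q)
  have "Poly_Mapping.keys (x ^ Suc q) \<subseteq> {u+v | u v. u \<in> Poly_Mapping.keys x \<and> v \<in> Poly_Mapping.keys (x ^ q)}"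
    using keys_mult[of x "x ^ q"] by (simp only: power_Suc)
  then show ?case using Suc assms divmon_add[of n P 1 _ q] by fastforce
qed

lemma of_nat_mpoly_zero:
  assumes "of_nat p = (0::'k::comm_semiring_1)"
  shows "of_nat p = (0::'k mpoly)"
proof -
  have "(of_nat p :: 'k mpoly) = Poly_Mapping.single 0 (of_nat p)" by (simp only: single_of_nat)
  also have "\<dots> = 0" using assms by simp
  finally show ?thesis .
qed

lemma keys_lin_pow:
  fixes l :: "'k::field mpoly"
  assumes pr: "prime p" and z: "of_nat p = (0::'k)" and l: "l \<in> A_deg n d 1"
  shows "\<forall>b\<in>Poly_Mapping.keys (l ^ (p ^ k * q)). divmon n (p ^ k) q b"
proof -
  let ?P = "p ^ k"
  have "l ^ ?P = (\<Sum>a\<in>Poly_Mapping.keys l. Poly_Mapping.single a (Poly_Mapping.lookup l a)) ^ ?P"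
    by (subst poly_expand) simp
  also have "\<dots> = (\<Sum>a\<in>Poly_Mapping.keys l. Poly_Mapping.single a (Poly_Mapping.lookup l a) ^ ?P)"
    by (rule frob_sum[OF pr of_nat_mpoly_zero[OF z]])
  finally have eq: "l ^ ?P = \<dots>" .
  have one: "\<forall>b\<in>Poly_Mapping.keys (l ^ ?P). divmon n ?P 1 b"
  proof
    fix b assume "b \<in> Poly_Mapping.keys (l ^ ?P)"
    then obtain a where a: "a \<in> Poly_Mapping.keys l"
      and b: "b \<in> Poly_Mapping.keys (Poly_Mapping.single a (Poly_Mapping.lookup l a) ^ ?P)"
      using eq keys_sum_sub[of "\<lambda>a. Poly_Mapping.single a (Poly_Mapping.lookup l a) ^ ?P" "Poly_Mapping.keys l"] by auto
    have lb: "\<forall>j. Poly_Mapping.lookup b j = ?P * Poly_Mapping.lookup a j"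
      using keys_single_pow b by blast
    have sa: "std_mon n d a" "mon_deg n a = 1" using l a unfolding A_deg_def by auto
    have ka: "Poly_Mapping.keys a \<subseteq> {1..n}" using sa unfolding std_mon_def by auto
    have "Poly_Mapping.keys b \<subseteq> {1..n}"
    proof
      fix j assume "j \<in> Poly_Mapping.keys b"
      then have "Poly_Mapping.lookup a j \<noteq> 0" using lb by (auto simp: in_keys_iff)
      then have "j \<in> Poly_Mapping.keys a" by (simp add: in_keys_iff)
      then show "j \<in> {1..n}" using ka by blast
    qed
    moreover have "mon_deg n b = ?P * 1"
      using sa(2) lb by (simp add: mon_deg_def sum_distrib_left[symmetric])
    ultimately show "divmon n ?P 1 b" unfolding divmon_def using lb by auto
  qed
  have "l ^ (?P * q) = (l ^ ?P) ^ q" by (simp add: power_mult)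
  then show ?thesis using keys_pow_divmon[OF one] by simp
qed



lemma trunc_zero_if: "(\<forall>a\<in>Poly_Mapping.keys f. \<not> std_mon n d a) \<Longrightarrow> trunc n d f = 0"
  by (rule poly_mapping_eqI) (auto simp: lookup_trunc in_keys_iff)

lemma sum_div_divmon:
  assumes "divmon n P q u" "P > 0"
  shows "(\<Sum>j\<in>{1..n}. Poly_Mapping.lookup u j div P) = q"
proof -
  have "P * (\<Sum>j\<in>{1..n}. Poly_Mapping.lookup u j div P) = (\<Sum>j\<in>{1..n}. P * (Poly_Mapping.lookup u j div P))"
    by (simp add: sum_distrib_left)
  also have "\<dots> = (\<Sum>j\<in>{1..n}. Poly_Mapping.lookup u j)"
    using assms(1) unfolding divmon_def by (intro sum.cong) auto
  also have "\<dots> = P * q" using assms(1) unfolding divmon_def mon_deg_def by auto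
  finally show ?thesis using assms(2) by simp
qed

lemma fail:
  fixes p :: nat
  assumes pr: "prime p" and z: "of_nat p = (0::'k::field)" and Pdef: "P = p ^ k" and q1: "q \<ge> 1"
    and se: "std_mon n d e" and sb: "std_mon n d \<beta>"
    and degb: "mon_deg n \<beta> = mon_deg n e + P * q"
    and kern: "\<forall>b. divmon n P q b \<longrightarrow> \<not> std_mon n d (b + e)"
    and bet: "(\<Sum>j\<in>{1..n}. Poly_Mapping.lookup \<beta> j div P) < q"
  shows "\<not> has_SLP TYPE('k) n d"
proof
  assume "has_SLP TYPE('k) n d"
  then obtain l :: "'k mpoly" where l: "l \<in> A_deg n d 1" and mr: "\<And>i m. m \<ge> 1 \<Longrightarrow> max_rank n d l i m"
    unfolding has_SLP_def by blast
  have P0: "P > 0" using Pdef pr prime_gt_0_nat by simp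
  define i where "i = mon_deg n e"
  define m where "m = P * q"
  have m1: "m \<ge> 1" using P0 q1 by (simp add: m_def)
  have keysl: "\<forall>b\<in>Poly_Mapping.keys (l ^ m). divmon n P q b"
    using keys_lin_pow[OF pr z l, of k q] Pdef m_def by simp
  have notinj: "\<not> inj_on (mult_map n d l m) (A_deg n d i)"
  proof
    assume inj: "inj_on (mult_map n d l m) (A_deg n d i)"
    have x: "Poly_Mapping.single e (1::'k) \<in> A_deg n d i" using se by (simp add: A_deg_def i_def)
    have o: "(0::'k mpoly) \<in> A_deg n d i" by (simp add: A_deg_def)
    have "mult_map n d l m (Poly_Mapping.single e 1) = 0"
      unfolding mult_map_def
    proof (rule trunc_zero_if, rule ballI)
      fix a assume "a \<in> Poly_Mapping.keys (l ^ m * Poly_Mapping.single e (1::'k))"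
      then obtain u where "u \<in> Poly_Mapping.keys (l ^ m)" "a = u + e"
        using keys_mult[of "l ^ m" "Poly_Mapping.single e (1::'k)"] by auto
      then show "\<not> std_mon n d a" using keysl kern by auto
    qed
    moreover have "mult_map n d l m 0 = 0" unfolding mult_map_def by (simp add: trunc_zero_if)
    moreover have "Poly_Mapping.single e (1::'k) \<noteq> 0" 
    proof
      assume "Poly_Mapping.single e (1::'k) = 0"
      then have "Poly_Mapping.lookup (Poly_Mapping.single e (1::'k)) e = Poly_Mapping.lookup 0 e" by simp
      then show False by simp
    qed
    ultimately show False using inj_onD[OF inj _ x o] by simp
  qed
  have notsurj: "mult_map n d l m ` A_deg n d i \<noteq> A_deg n d (i + m)"
  proof
    assume eq: "mult_map n d l m ` A_deg n d i = A_deg n d (i + m)"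
    have "Poly_Mapping.single \<beta> (1::'k) \<in> A_deg n d (i + m)" using sb degb by (simp add: A_deg_def i_def m_def)
    then obtain f where h: "Poly_Mapping.single \<beta> 1 = trunc n d (l ^ m * f)"
      using eq unfolding mult_map_def by auto
    have "Poly_Mapping.lookup (l ^ m * f) \<beta> = 1"
    proof -
      have "(1::'k) = Poly_Mapping.lookup (Poly_Mapping.single \<beta> 1) \<beta>" by simp
      also have "\<dots> = Poly_Mapping.lookup (l ^ m * f) \<beta>" using sb by (simp only: h lookup_trunc if_True)
      finally show ?thesis by simp
    qed
    then have "\<beta> \<in> Poly_Mapping.keys (l ^ m * f)" by (simp add: in_keys_iff)
    then obtain u v where u: "u \<in> Poly_Mapping.keys (l ^ m)" and buv: "\<beta> = u + v"
      using keys_mult[of "l ^ m" f] by auto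
    have du: "divmon n P q u" using u keysl by auto
    have "q = (\<Sum>j\<in>{1..n}. Poly_Mapping.lookup u j div P)" using sum_div_divmon[OF du P0] by simp
    also have "\<dots> \<le> (\<Sum>j\<in>{1..n}. Poly_Mapping.lookup \<beta> j div P)"
      by (intro sum_mono div_le_mono) (simp add: buv lookup_add)
    finally show False using bet by simp
  qed
  show False using mr[OF m1, of i] notinj notsurj unfolding max_rank_def by simp
qed



definition monof :: "nat \<Rightarrow> (nat \<Rightarrow> nat) \<Rightarrow> (nat \<Rightarrow>\<^sub>0 nat)" where
  "monof n f = (\<Sum>j\<in>{1..n}. Poly_Mapping.single j (f j))"

lemma lookup_mono: "Poly_Mapping.lookup (monof n f) j = (if j \<in> {1..n} then f j else 0)"
  unfolding monof_def lookup_sum by (auto simp: lookup_single when_def)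

lemma std_mono: "(\<And>j. j \<in> {1..n} \<Longrightarrow> f j < d j) \<Longrightarrow> std_mon n d (monof n f)"
  unfolding std_mon_def by (auto simp: lookup_mono in_keys_iff split: if_splits)

lemma deg_mono: "mon_deg n (monof n f) = (\<Sum>j\<in>{1..n}. f j)"
  unfolding mon_deg_def by (auto simp: lookup_mono intro: sum.cong)

lemma sub_sum: fixes n :: nat and b :: "nat \<Rightarrow> nat" shows "T \<le> (\<Sum>j\<in>{1..n}. b j) \<Longrightarrow> \<exists>c. (\<forall>j. c j \<le> (b j::nat)) \<and> (\<Sum>j\<in>{1..n}. c j) = T"
proof (induction n arbitrary: T)
  case 0 then show ?case by (intro exI[of _ "\<lambda>_. 0"]) auto
next
  case (Suc n)
  have split: "(\<Sum>j\<in>{1..Suc n}. g j) = (\<Sum>j\<in>{1..n}. g j) + g (Suc n)" for g :: "nat \<Rightarrow> nat"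
    by simp
  show ?case
  proof (cases "T \<le> (\<Sum>j\<in>{1..n}. b j)")
    case True
    then obtain c where c: "\<forall>j. c j \<le> b j" "(\<Sum>j\<in>{1..n}. c j) = T" using Suc.IH by blast
    let ?c = "c(Suc n := 0)"
    have "(\<Sum>j\<in>{1..n}. ?c j) = (\<Sum>j\<in>{1..n}. c j)" by (intro sum.cong) auto
    then show ?thesis using c by (intro exI[of _ ?c]) (auto simp only: split, auto)
  next
    case False
    let ?c = "b(Suc n := T - (\<Sum>j\<in>{1..n}. b j))"
    have "(\<Sum>j\<in>{1..n}. ?c j) = (\<Sum>j\<in>{1..n}. b j)" by (intro sum.cong) auto
    then show ?thesis using False Suc.prems by (intro exI[of _ ?c]) (auto simp only: split, auto)
  qed
qed

lemma div_helper: "(x::nat) < P \<Longrightarrow> (a * P + x) div P = a"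
  by simp

lemma master:
  fixes p :: nat and d :: "nat \<Rightarrow> nat"
  assumes pr: "prime p" and z: "of_nat p = (0::'k::field)" and Pdef: "P = p ^ k"
    and dpos: "\<And>j. j \<in> {1..n} \<Longrightarrow> d j \<ge> 1"
    and big: "(\<Sum>j\<in>{1..n}. (if (d j - 1) div P \<ge> 1 \<and> 2 * ((d j - 1) mod P + 1) < P
               then int P - 1 - int ((d j - 1) mod P + 1) else int ((d j - 1) mod P + 1) - 1)) \<ge> int P"
  shows "\<not> has_SLP TYPE('k) n d"
proof -
  define NN where "NN j = (d j - 1) div P" for j
  define rr where "rr j = (d j - 1) mod P + 1" for j
  define B where "B j = (NN j \<ge> 1 \<and> 2 * rr j < P)" for j
  define c where "c j = (if B j then int P - 1 - int (rr j) else int (rr j) - 1)" for j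
  define G where "G j = (if B j then NN j - 1 else NN j)" for j
  define ee where "ee j = (if B j then rr j else 0)" for j
  define bb where "bb j = (if B j then NN j * P - 1 else d j - 1)" for j
  define q where "q = (\<Sum>j\<in>{1..n}. G j) + 1"
  have P0: "P > 0" using Pdef pr prime_gt_0_nat by simp
  have bigc: "(\<Sum>j\<in>{1..n}. c j) \<ge> int P" using big unfolding c_def B_def NN_def rr_def by simp
  have dd: "d j = NN j * P + rr j" if "j \<in> {1..n}" for j
    using dpos[OF that] div_mult_mod_eq[of "d j - 1" P] unfolding NN_def rr_def by linarith
  have rr1: "rr j \<ge> 1" "rr j \<le> P" for j
    using P0 unfolding rr_def by (auto simp: Suc_le_eq)
  have ee_lt: "ee j < d j" if j: "j \<in> {1..n}" for j
  proof (cases "B j")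
    case True
    then have "NN j * P \<ge> 1" using P0 unfolding B_def by (simp add: Suc_le_eq)
    then show ?thesis using dd[OF j] True by (simp add: ee_def)
  next
    case False then show ?thesis using dpos[OF j] by (simp add: ee_def)
  qed
  have bb_div: "bb j div P = G j \<and> bb j < d j \<and> int (bb j) = int (ee j) + int P * int (G j) + c j"
    if j: "j \<in> {1..n}" for j
  proof (cases "B j")
    case True
    then have N1: "NN j \<ge> 1" and r2: "2 * rr j < P" unfolding B_def by auto
    have e1: "NN j * P - 1 = (NN j - 1) * P + (P - 1)"
      using N1 P0 by (cases "NN j") (auto simp: algebra_simps)
    have "bb j div P = NN j - 1" using True e1 P0 div_helper[of "P - 1" P "NN j - 1"] by (simp add: bb_def)
    moreover have "bb j < d j" using True dd[OF j] N1 P0 rr1[of j]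
      by (simp add: bb_def)
    moreover have "int (bb j) = int (ee j) + int P * int (G j) + c j"
      using True e1 N1 P0 r2 by (simp add: bb_def ee_def G_def c_def of_nat_diff algebra_simps)
    ultimately show ?thesis using True by (simp add: G_def)
  next
    case False
    have e1: "d j - 1 = NN j * P + (rr j - 1)" using dd[OF j] rr1[of j] by simp
    have "rr j - 1 < P" using rr1[of j] by simp
    then have "bb j div P = NN j" using False e1 div_helper[of "rr j - 1" P "NN j"] by (simp add: bb_def)
    moreover have "bb j < d j" using False dpos[OF j] by (simp add: bb_def)
    moreover have "int (bb j) = int (ee j) + int P * int (G j) + c j"
      using False e1 rr1[of j] by (simp add: bb_def ee_def G_def c_def of_nat_diff algebra_simps)
    ultimately show ?thesis using False by (simp add: G_def)
  qed
  have kern_j: "x div P \<le> G j" if j: "j \<in> {1..n}" and dv: "P dvd x" and lt: "x + ee j < d j" for j x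
  proof -
    obtain t where t: "x = P * t" using dv by blast
    show ?thesis
    proof (cases "B j")
      case True
      then have "P * t < P * NN j" using lt dd[OF j] t by (simp add: ee_def algebra_simps)
      then have "t < NN j" by simp
      then show ?thesis using True t P0 by (simp add: G_def)
    next
      case False
      then have "P * t < P * (NN j + 1)" using lt dd[OF j] t rr1[of j] by (simp add: ee_def algebra_simps)
      then have "t < NN j + 1" by (simp only: mult_less_cancel1)
      then show ?thesis using False t P0 by (simp add: G_def)
    qed
  qed
  have sumint: "int (\<Sum>j\<in>{1..n}. bb j) = int (\<Sum>j\<in>{1..n}. ee j) + int P * int (\<Sum>j\<in>{1..n}. G j) + (\<Sum>j\<in>{1..n}. c j)"
    using bb_div by (simp add: of_nat_sum sum.distrib sum_distrib_left)
  have ge: "(\<Sum>j\<in>{1..n}. ee j) + P * q \<le> (\<Sum>j\<in>{1..n}. bb j)"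
  proof -
    have "int ((\<Sum>j\<in>{1..n}. ee j) + P * q) = int (\<Sum>j\<in>{1..n}. ee j) + int P * int (\<Sum>j\<in>{1..n}. G j) + int P"
      by (simp add: q_def algebra_simps)
    also have "\<dots> \<le> int (\<Sum>j\<in>{1..n}. bb j)" using sumint bigc by linarith
    finally show ?thesis by linarith
  qed
  obtain cc where cc: "\<forall>j. cc j \<le> bb j" "(\<Sum>j\<in>{1..n}. cc j) = (\<Sum>j\<in>{1..n}. ee j) + P * q"
    using sub_sum[OF ge] by blast
  show ?thesis
  proof (rule fail[OF pr z Pdef, of q n d "monof n ee" "monof n cc"])
    show "q \<ge> 1" by (simp add: q_def)
    show "std_mon n d (monof n ee)" by (rule std_mono) (use ee_lt in auto)
    show "std_mon n d (monof n cc)" by (rule std_mono) (use bb_div cc(1) le_less_trans in blast)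
    show "mon_deg n (monof n cc) = mon_deg n (monof n ee) + P * q" using cc(2) by (simp add: deg_mono)
    show "\<forall>b. divmon n P q b \<longrightarrow> \<not> std_mon n d (b + monof n ee)"
    proof (intro allI impI notI)
      fix b assume db: "divmon n P q b" and st: "std_mon n d (b + monof n ee)"
      have "q = (\<Sum>j\<in>{1..n}. Poly_Mapping.lookup b j div P)" using sum_div_divmon[OF db P0] by simp
      also have "\<dots> \<le> (\<Sum>j\<in>{1..n}. G j)"
      proof (rule sum_mono)
        fix j assume j: "j \<in> {1..n}"
        have "Poly_Mapping.lookup (b + monof n ee) j < d j" using st j unfolding std_mon_def by blast
        then have "Poly_Mapping.lookup b j + ee j < d j" using j by (simp add: lookup_add lookup_mono)
        then show "Poly_Mapping.lookup b j div P \<le> G j" using kern_j[OF j] db unfolding divmon_def by blast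
      qed
      finally show False by (simp add: q_def)
    qed
    have "(\<Sum>j\<in>{1..n}. Poly_Mapping.lookup (monof n cc) j div P) \<le> (\<Sum>j\<in>{1..n}. G j)"
    proof (rule sum_mono)
      fix j assume j: "j \<in> {1..n}"
      have "cc j div P \<le> bb j div P" using cc(1) div_le_mono by blast
      then show "Poly_Mapping.lookup (monof n cc) j div P \<le> G j" using j bb_div[OF j] by (simp add: lookup_mono)
    qed
    then show "(\<Sum>j\<in>{1..n}. Poly_Mapping.lookup (monof n cc) j div P) < q" by (simp add: q_def)
  qed
qed



definition cval :: "nat \<Rightarrow> nat \<Rightarrow> int" where
  "cval P x = (if (x - 1) div P \<ge> 1 \<and> 2 * ((x - 1) mod P + 1) < P
     then int P - 1 - int ((x - 1) mod P + 1) else int ((x - 1) mod P + 1) - 1)"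

lemma master2:
  fixes p :: nat and d :: "nat \<Rightarrow> nat"
  assumes pr: "prime p" and z: "of_nat p = (0::'k::field)" and Pdef: "P = p ^ k"
    and dpos: "\<And>j. j \<in> {1..n} \<Longrightarrow> d j \<ge> 1"
    and big: "(\<Sum>j\<in>{1..n}. cval P (d j)) \<ge> int P"
  shows "\<not> has_SLP TYPE('k) n d"
proof (rule master[OF pr z Pdef dpos])
  show "(\<Sum>j\<in>{1..n}. (if (d j - 1) div P \<ge> 1 \<and> 2 * ((d j - 1) mod P + 1) < P
               then int P - 1 - int ((d j - 1) mod P + 1) else int ((d j - 1) mod P + 1) - 1)) \<ge> int P"
    using big unfolding cval_def .
qed

lemma cval_ge0: "P > 0 \<Longrightarrow> cval P x \<ge> 0"
  unfolding cval_def by auto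

lemma cval_small: "P > 0 \<Longrightarrow> 1 \<le> x \<Longrightarrow> x \<le> P \<Longrightarrow> cval P x = int x - 1"
proof -
  assume a: "P > 0" "1 \<le> x" "x \<le> P"
  then have "(x - 1) div P = 0" "(x - 1) mod P = x - 1" by auto
  then show ?thesis unfolding cval_def using a by auto
qed

lemma cval_big:
  assumes "P > 0" "x > P"
  shows "cval P x \<ge> int ((x - 1) mod P + 1) - 1 \<and> cval P x \<ge> int P - 1 - int ((x - 1) mod P + 1)"
proof -
  have "(x - 1) div P \<ge> 1" using assms by (simp add: div_greater_zero_iff Suc_le_eq)
  then show ?thesis unfolding cval_def by auto
qed

lemma cval_big2: "P > 0 \<Longrightarrow> x > P \<Longrightarrow> 2 * cval P x \<ge> int P - 2"
  using cval_big[of P x] by linarith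

lemma mod_r:
  fixes P x M r :: nat
  assumes "P > 0" "x = M * P + r" "0 < r" "r \<le> P"
  shows "(x - 1) mod P + 1 = r"
proof -
  have r1: "1 \<le> r" using assms(3) by simp
  have "x - 1 = M * P + (r - 1)" unfolding assms(2) using r1 by simp
  moreover have "r - 1 < P" using assms by simp
  ultimately have "(x - 1) mod P = r - 1" by simp
  then show ?thesis using r1 by simp
qed

theorem proposition3p5:
  fixes p n :: nat and d r :: "nat \<Rightarrow> nat" and N :: "nat \<Rightarrow> int"
  assumes char: "CHAR('k::field) = p" and p_pos: "p > 0"
    and n3: "n \<ge> 3"
    and d_mono: "\<And>i j. 1 \<le> i \<Longrightarrow> i \<le> j \<Longrightarrow> j \<le> n \<Longrightarrow> d j \<le> d i"
    and d_ge2: "\<And>i. 1 \<le> i \<Longrightarrow> i \<le> n \<Longrightarrow> d i \<ge> 2"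
    and decomp: "\<And>i. 1 \<le> i \<Longrightarrow> i \<le> n \<Longrightarrow>
        int (d i) = N i * int p + int (r i) \<and> 0 < r i \<and> r i \<le> p"
    and cond: "p = 2
      \<or> (p \<ge> 3 \<and> d 1 > p \<and> d 2 \<le> p \<and> (\<Sum>i=2..n. d i - 1) > r 1)
      \<or> (p \<ge> 3 \<and> d 1 > p \<and> d 2 \<le> p \<and> r 1 + (\<Sum>i=2..n. d i - 1) > p)
      \<or> (p \<ge> 3 \<and> d 1 \<le> p \<and> (\<Sum>i=1..n. d i - 1) \<ge> p)
      \<or> (p \<ge> 3 \<and> d 2 > p)"
  shows "\<not> has_SLP TYPE('k) n d"
proof -
  have pr: "prime p" using prime_CHAR_semidom[where 'a='k] char p_pos by simp
  have z: "of_nat p = (0::'k)" using char of_nat_CHAR[where 'a='k] by simp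
  have dpos: "\<And>j. j \<in> {1..n} \<Longrightarrow> d j \<ge> 1" using d_ge2 by fastforce
  have dge2: "\<And>j. j \<in> {1..n} \<Longrightarrow> d j \<ge> 2" using d_ge2 by auto
  have dle1: "\<And>j. j \<in> {1..n} \<Longrightarrow> d j \<le> d 1" using d_mono by auto
  have dle2: "\<And>j. j \<in> {2..n} \<Longrightarrow> d j \<le> d 2" using d_mono by auto
  have split1: "(\<Sum>j\<in>{1..n}. f j) = f 1 + (\<Sum>j\<in>{2..n}. f j)" for f :: "nat \<Rightarrow> int"
    using n3 by (simp add: sum.atLeast_Suc_atMost numeral_eq_Suc)
  have split2: "(\<Sum>j\<in>{2..n}. f j) = f 2 + (\<Sum>j\<in>{3..n}. f j)" for f :: "nat \<Rightarrow> int"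
    using n3 by (simp add: sum.atLeast_Suc_atMost numeral_eq_Suc)
  have split3: "(\<Sum>j\<in>{3..n}. f j) = f 3 + (\<Sum>j\<in>{4..n}. f j)" for f :: "nat \<Rightarrow> int"
    using n3 by (simp add: sum.atLeast_Suc_atMost numeral_eq_Suc)
  have rest_nonneg: "(\<Sum>j\<in>{4..n}. cval P (d j)) \<ge> 0" if "P > 0" for P
    using cval_ge0[OF that] by (simp add: sum_nonneg)
  consider (c1) "p = 2" | (c23) "p \<ge> 3" "d 1 > p" "d 2 \<le> p"
      "(\<Sum>i=2..n. d i - 1) > r 1 \<or> r 1 + (\<Sum>i=2..n. d i - 1) > p"
    | (c4) "p \<ge> 3" "d 1 \<le> p" "(\<Sum>i=1..n. d i - 1) \<ge> p"
    | (c5) "p \<ge> 3" "d 2 > p"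
    using cond by blast
  then show ?thesis
  proof cases
    case c4
    have "(\<Sum>j\<in>{1..n}. cval p (d j)) = (\<Sum>j\<in>{1..n}. int (d j - 1))"
    proof (rule sum.cong)
      fix j assume j: "j \<in> {1..n}"
      have "d j \<le> p" using dle1[OF j] c4 by simp
      then show "cval p (d j) = int (d j - 1)" using cval_small[OF p_pos dpos[OF j]] dpos[OF j] by simp
    qed simp
    also have "\<dots> = int (\<Sum>j\<in>{1..n}. d j - 1)" by (simp add: of_nat_sum)
    finally have eq: "(\<Sum>j\<in>{1..n}. cval p (d j)) = int (\<Sum>j\<in>{1..n}. d j - 1)" .
    have "int p \<le> int (\<Sum>j\<in>{1..n}. d j - 1)" using c4(3) by (simp only: of_nat_le_iff)
    then have "(\<Sum>j\<in>{1..n}. cval p (d j)) \<ge> int p" using eq by linarith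
    then show ?thesis using master2[OF pr z, of p 1 n d] dpos by simp
  next
    case c23
    have in1: "1 \<in> {1..n}" using n3 by simp
    obtain NN where NN: "int (d 1) = NN * int p + int (r 1)" "0 < r 1" "r 1 \<le> p"
      using decomp[of 1] n3 by auto
    have "NN * int p > 0" using NN c23 by simp
    then have "NN > 0" using p_pos by (simp add: zero_less_mult_iff)
    then have "int (d 1) = int (nat NN * p + r 1)" using NN(1) by simp
    then have d1: "d 1 = nat NN * p + r 1" by (simp only: of_nat_eq_iff)
    have rr: "(d 1 - 1) mod p + 1 = r 1" by (rule mod_r[OF p_pos d1 NN(2,3)])
    have cb: "cval p (d 1) \<ge> int (r 1) - 1" "cval p (d 1) \<ge> int p - 1 - int (r 1)"
      using cval_big[OF p_pos c23(2)] rr by auto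
    have "(\<Sum>j\<in>{2..n}. cval p (d j)) = (\<Sum>j\<in>{2..n}. int (d j - 1))"
    proof (rule sum.cong)
      fix j assume j: "j \<in> {2..n}"
      have j1: "j \<in> {1..n}" using j by auto
      have "d j \<le> p" using dle2[OF j] c23 by simp
      then show "cval p (d j) = int (d j - 1)" using cval_small[OF p_pos dpos[OF j1]] dpos[OF j1] by simp
    qed simp
    also have "\<dots> = int (\<Sum>j\<in>{2..n}. d j - 1)" by (simp add: of_nat_sum)
    finally have s2: "(\<Sum>j\<in>{2..n}. cval p (d j)) = int (\<Sum>j\<in>{2..n}. d j - 1)" .
    have "(\<Sum>j\<in>{1..n}. cval p (d j)) \<ge> int p"
    proof (cases "(\<Sum>i=2..n. d i - 1) > r 1")
      case True
      then have "int (\<Sum>j\<in>{2..n}. d j - 1) \<ge> int (r 1) + 1" by linarith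
      then show ?thesis using split1[of "\<lambda>j. cval p (d j)"] s2 cb by linarith
    next
      case False
      then have "r 1 + (\<Sum>i=2..n. d i - 1) > p" using c23(4) by blast
      then have "int (r 1) + int (\<Sum>j\<in>{2..n}. d j - 1) \<ge> int p + 1" by linarith
      then show ?thesis using split1[of "\<lambda>j. cval p (d j)"] s2 cb by linarith
    qed
    then show ?thesis using master2[OF pr z, of p 1 n d] dpos by simp
  next
    case c5
    have odd: "odd p" using pr c5(1) prime_odd_nat[of p] by simp
    have d1: "d 1 > p" using c5 dle1[of 2] n3 by fastforce
    have two: "2 * cval p x \<ge> int p - 1" if "x > p" for x
    proof -
      have a: "2 * cval p x \<ge> int p - 2" by (rule cval_big2[OF p_pos that])
      have "2 * cval p x \<noteq> int p - 2"
      proof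
        assume h: "2 * cval p x = int p - 2"
        have "even (2 * cval p x)" by simp
        then have "even (int p - 2)" by (simp only: h)
        then have "even (int p)" by simp
        then show False using odd by simp
      qed
      then show ?thesis using a by linarith
    qed
    have c3: "cval p (d 3) \<ge> 1"
    proof (cases "d 3 \<le> p")
      case True
      have "3 \<in> {1..n}" using n3 by simp
      then show ?thesis using cval_small[OF p_pos _ True] dge2[of 3] by simp
    next
      case False
      then show ?thesis using two[of "d 3"] c5 by simp
    qed
    have "(\<Sum>j\<in>{1..n}. cval p (d j)) \<ge> int p"
      using split1[of "\<lambda>j. cval p (d j)"] split2[of "\<lambda>j. cval p (d j)"] split3[of "\<lambda>j. cval p (d j)"]
        rest_nonneg[OF p_pos] two[OF d1] two[OF c5(2)] c3 by linarith
    then show ?thesis using master2[OF pr z, of p 1 n d] dpos by simp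
  next
    case c1
    have ex: "\<exists>k. d 2 \<le> 2 ^ k" by (intro exI[of _ "d 2"]) (simp add: less_imp_le)
    define k where "k = (LEAST k. d 2 \<le> 2 ^ k)"
    have dk: "d 2 \<le> 2 ^ k" unfolding k_def by (rule LeastI_ex[OF ex])
    have d22: "d 2 \<ge> 2" using dge2[of 2] n3 by simp
    have k1: "k \<ge> 1"
    proof (rule ccontr)
      assume "\<not> k \<ge> 1" then have "k = 0" by simp
      then show False using dk d22 by simp
    qed
    have "\<not> d 2 \<le> 2 ^ (k - 1)" unfolding k_def by (rule not_less_Least) (use k1 k_def in simp)
    then have lt: "2 ^ (k - 1) < d 2" by simp
    define P where "P = (2::nat) ^ k"
    have P0: "P > 0" by (simp add: P_def)
    have P2: "P = 2 * 2 ^ (k - 1)" using k1 unfolding P_def by (cases k) auto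
    have c2v: "cval P (d 2) = int (d 2) - 1" using cval_small[OF P0 _ dk[folded P_def]] d22 by simp
    have c2b: "2 * cval P (d 2) \<ge> int P" using c2v lt P2 by linarith
    have c1b: "2 * cval P (d 1) \<ge> int P - 2"
    proof (cases "d 1 \<le> P")
      case True
      have "d 1 \<ge> d 2" using dle1[of 2] n3 by simp
      then show ?thesis using cval_small[OF P0 _ True] c2v c2b by simp
    next
      case False then show ?thesis using cval_big2[OF P0] by simp
    qed
    have c3b: "cval P (d 3) \<ge> 1"
    proof -
      have "d 3 \<le> d 2" using dle2[of 3] n3 by simp
      then have "d 3 \<le> P" using dk P_def by simp
      then show ?thesis using cval_small[OF P0 _ \<open>d 3 \<le> P\<close>] dge2[of 3] n3 by simp
    qed
    have "(\<Sum>j\<in>{1..n}. cval P (d j)) \<ge> int P"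
      using split1[of "\<lambda>j. cval P (d j)"] split2[of "\<lambda>j. cval P (d j)"] split3[of "\<lambda>j. cval P (d j)"]
        rest_nonneg[OF P0] c1b c2b c3b by linarith
    then show ?thesis using master2[OF pr z, of P k n d] dpos c1 P_def by simp
  qed
qed


end
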